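(* Let $p$ be a prime, $n\ge 1$, let $F:\mathbb{F}_{p^n}\rightarrow \mathbb{F}_{p^n}$ be any function and let $\alpha\in\mathbb{F}_{p^n}$. Then for all $x\in\mathbb{F}_{p^n}$, \[\Delta_{\underbrace{\alpha,\alpha,\dots,\alpha}_{p-1}} F(x)= -\Delta_{\alpha,2\alpha,\dots,(p-1)\alpha} F(x).\]
   Context: For $F:\mathbb{F}_{p^n}\to\mathbb{F}_{p^n}$ and $\alpha\in\mathbb{F}_{p^n}$, the (first-order) discrete derivative is $\Delta_\alpha F(x)=F(x+\alpha)-F(x)$. For directions $\alpha_1,\dots,\alpha_d\in\mathbb{F}_{p^n}$ the $d$-th order derivative is defined recursively by $\Delta_{\alpha_1,\dots,\alpha_d}F=\Delta_{\alpha_1}\Delta_{\alpha_2,\dots,\alpha_d}F$, equivalently \[\Delta_{\alpha_1,\dots,\alpha_d} F(x)=\sum_{j=0}^{d}(-1)^{d-j}\sum_{\{i_1,\dots,i_j\}\subseteq\{1,\dots,d\}}F\Big(x+\sum_{k=1}^j\alpha_{i_k}\Big).\] Here $k\alpha$ for an integer $k$ denotes the $k$-fold sum of $\alpha$. *)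

theory Defs
  imports Main "HOL-Computational_Algebra.Primes"
begin

fun ddiff :: "'a::ab_group_add list \<Rightarrow> ('a \<Rightarrow> 'a) \<Rightarrow> 'a \<Rightarrow> 'a" where
  "ddiff [] F = F"
| "ddiff (a # as) F = (\<lambda>x. ddiff as F (x + a) - ddiff as F x)"

end

theory Submission
  imports Defs "HOL-Computational_Algebra.Polynomial" "HOL-Number_Theory.Number_Theory"
begin

definition act :: "'a::comm_ring_1 \<Rightarrow> 'a poly \<Rightarrow> ('a \<Rightarrow> 'a) \<Rightarrow> 'a \<Rightarrow> 'a" where
  "act \<alpha> q G x = (\<Sum>i\<le>degree q. Polynomial.coeff q i * G (x + of_nat i * \<alpha>))"

lemma act_gen:
  assumes "degree q \<le> N"
  shows "act \<alpha> q G x = (\<Sum>i\<le>N. Polynomial.coeff q i * G (x + of_nat i * \<alpha>))"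
  unfolding act_def
proof (rule sum.mono_neutral_left)
  show "\<forall>i\<in>{..N} - {..degree q}. Polynomial.coeff q i * G (x + of_nat i * \<alpha>) = 0"
    using assms by (auto simp: coeff_eq_0)
qed (use assms in auto)

lemma act_diff: "act \<alpha> (q - r) G x = act \<alpha> q G x - act \<alpha> r G x"
proof -
  let ?N = "max (degree q) (degree r)"
  have "degree (q - r) \<le> ?N" by (rule degree_diff_le_max)
  then show ?thesis
    by (simp add: act_gen[of _ ?N] sum_subtractf algebra_simps)
qed

lemma act_add: "act \<alpha> (q + r) G x = act \<alpha> q G x + act \<alpha> r G x"
proof -
  let ?N = "max (degree q) (degree r)"
  have "degree (q + r) \<le> ?N" by (rule degree_add_le_max)
  then show ?thesis
    by (simp add: act_gen[of _ ?N] sum.distrib algebra_simps)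
qed

lemma act_neg: "act \<alpha> (- q) G x = - act \<alpha> q G x"
  using act_diff[of \<alpha> 0 q G x] by (simp add: act_def)

lemma act_smult: "act \<alpha> (Polynomial.smult a q) G x = a * act \<alpha> q G x"
  by (simp add: act_gen[of _ "degree q"] sum_distrib_left algebra_simps degree_smult_le)

lemma act_pCons: "act \<alpha> (pCons a q) G x = a * G x + act \<alpha> q G (x + \<alpha>)"
proof -
  have "act \<alpha> (pCons a q) G x = (\<Sum>i\<le>Suc (degree q). Polynomial.coeff (pCons a q) i * G (x + of_nat i * \<alpha>))"
    by (rule act_gen) (simp add: degree_pCons_le)
  also have "\<dots> = a * G x + (\<Sum>i\<le>degree q. Polynomial.coeff q i * G (x + \<alpha> + of_nat i * \<alpha>))"
    by (subst sum.atMost_Suc_shift) (simp add: algebra_simps)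
  finally show ?thesis by (simp add: act_def)
qed

lemma act_mult: "act \<alpha> (q * r) G x = act \<alpha> q (act \<alpha> r G) x"
proof (induction q arbitrary: x rule: pCons_induct)
  case 0
  then show ?case by (simp add: act_def)
next
  case (pCons a q)
  have "act \<alpha> (pCons a q * r) G x = act \<alpha> (Polynomial.smult a r + pCons 0 (q * r)) G x"
    by simp
  also have "\<dots> = a * act \<alpha> r G x + act \<alpha> (q * r) G (x + \<alpha>)"
    by (simp add: act_add act_smult act_pCons)
  also have "\<dots> = act \<alpha> (pCons a q) (act \<alpha> r G) x"
    by (simp add: act_pCons pCons.IH)
  finally show ?case .
qed

lemma act_one: "act \<alpha> 1 G x = G x"
  by (simp add: act_def)

lemma act_X: "act \<alpha> [:0,1:] G x = G (x + \<alpha>)"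
  by (simp add: act_pCons act_def)

lemma act_Xpow: "act \<alpha> ([:0,1:] ^ k) G x = G (x + of_nat k * \<alpha>)"
proof (induction k arbitrary: x)
  case 0
  then show ?case by (simp add: act_one)
next
  case (Suc k)
  have "act \<alpha> ([:0,1:] ^ Suc k) G x = G (x + \<alpha> + of_nat k * \<alpha>)"
    by (simp only: power_Suc act_mult act_X Suc.IH)
  then show ?case by (simp add: algebra_simps)
qed

lemma ddiff_act:
  "ddiff (map (\<lambda>k. of_nat k * \<alpha>) ks) F x
     = act \<alpha> (prod_list (map (\<lambda>k. [:0,1:] ^ k - 1) ks)) F x"
proof (induction ks arbitrary: x)
  case Nil
  then show ?case by (simp add: act_one)
next
  case (Cons k ks)
  show ?case
    by (simp add: act_mult act_diff act_Xpow act_one Cons.IH[symmetric])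
qed

lemma frob:
  fixes a b :: "'a::comm_ring_1"
  assumes "prime p" "of_nat p = (0::'a)"
  shows "(a + b) ^ p = a ^ p + b ^ p"
proof -
  let ?f = "\<lambda>k. of_nat (p choose k) * a ^ k * b ^ (p - k)"
  have bin: "(a + b) ^ p = (\<Sum>k\<le>p. ?f k)" by (rule binomial_ring)
  have zero: "\<forall>i\<in>{..p} - {0, p}. ?f i = 0"
    proof
      fix i assume i: "i \<in> {..p} - {0, p}"
      then have "p dvd (p choose i)"
        using assms(1) by (intro dvd_choose_prime) auto
      then obtain m where "p choose i = p * m" by blast
      then show "?f i = 0" using assms(2) by simp
    qed
  have "(a + b) ^ p = (\<Sum>k\<in>{0,p}. ?f k)"
    using bin sum.mono_neutral_right[of "{..p}" "{0,p}" ?f] zero by auto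
  also have "\<dots> = a ^ p + b ^ p"
    using assms(1) by (simp add: prime_gt_0_nat[THEN gr_implies_not0])
  finally show ?thesis .
qed

theorem lemma1:
  fixes F :: "'a::{field,finite} \<Rightarrow> 'a" and \<alpha> x :: 'a and p n :: nat
  assumes "prime p" and "n \<ge> 1" and "card (UNIV :: 'a set) = p ^ n"
  shows "ddiff (replicate (p - 1) \<alpha>) F x
           = - ddiff (map (\<lambda>k. of_nat k * \<alpha>) [1..<p]) F x"
proof -
  have cpos: "CHAR('a) > 0" by (simp add: finite_imp_CHAR_pos)
  then have cprime: "prime CHAR('a)" by (rule prime_CHAR_semidom)
  have "CHAR('a) dvd p ^ n" using CHAR_dvd_CARD[where 'a='a] assms(3) by simp
  then have "CHAR('a) dvd p" using cprime prime_dvd_power by blast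
  then have charp: "CHAR('a) = p" using cprime assms(1) primes_dvd_imp_eq by blast
  have p0: "of_nat p = (0::'a)" using charp of_nat_CHAR by metis
  have p0': "of_nat p = (0::'a poly)" using charp of_nat_CHAR[where 'a="'a poly"] by simp
  define X :: "'a poly" where "X = [:0,1:]"
  define u where "u = X - 1"
  define S where "S = (\<lambda>k. \<Sum>i<k. X ^ i)"
  define P where "P = (\<Prod>k\<in>{1..<p}. S k)"
  define c :: "'a poly" where "c = of_nat (fact (p - 1))"
  have pgt: "p \<ge> 2" using assms(1) prime_ge_2_nat by blast
  have XS: "X ^ k - 1 = u * S k" for k
    unfolding u_def S_def by (rule power_diff_1_eq)
  have polyS: "poly (S k) 1 = of_nat k" for k
    by (simp add: S_def X_def poly_sum poly_power)
  have "poly P 1 = (\<Prod>k\<in>{1..<p}. (of_nat k :: 'a))"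
    by (simp add: P_def poly_prod polyS)
  also have "\<dots> = of_nat (fact (p - 1))"
  proof -
    have "{1..<p} = {1..p-1}" using pgt by auto
    then show ?thesis by (simp add: fact_prod)
  qed
  finally have "poly (P - c) 1 = 0" by (simp add: c_def)
  then have "[:-1,1:] dvd (P - c)" using poly_eq_0_iff_dvd[of "P - c" 1] by simp
  moreover have ueq: "u = [:-1,1:]" by (simp add: u_def X_def one_pCons)
  ultimately obtain Q where Q: "P - c = u * Q" by blast
  have w: "[int (fact (p - 1)) = - 1] (mod int p)"
    using wilson_theorem[OF assms(1)] by (simp only: of_nat_fact)
  then have "of_int (int (fact (p - 1))) = (of_int (-1) :: 'a poly)"
    using of_int_eq_iff_cong_CHAR[where 'a="'a poly", of "int (fact (p - 1))" "-1"] charp by simp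
  then have cm1: "c = -1" by (simp only: c_def of_int_of_nat_eq of_int_minus of_int_1)
  have up: "u ^ p = X ^ p - 1"
  proof -
    have "u ^ p = X ^ p + (-1) ^ p" unfolding u_def
      using frob[OF assms(1) p0', of X "-1"] by simp
    also have "(-1 :: 'a poly) ^ p = - (1 ^ p)"
      by (rule minus_power_prime_CHAR) (use charp assms(1) in simp_all)
    finally show ?thesis by simp
  qed
  have upact: "act \<alpha> (u ^ p) G y = 0" for G y
    by (simp add: up act_diff act_Xpow act_one p0 X_def)
  have "(\<Prod>k\<in>{1..<p}. X ^ k - 1) = u ^ (p - 1) * P"
    by (simp add: XS P_def prod.distrib)
  also have "\<dots> = u ^ (p - 1) * (c + u * Q)" using Q by (simp add: algebra_simps)
  also have "\<dots> = - (u ^ (p - 1)) + u ^ p * Q"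
    using pgt cm1 by (simp add: algebra_simps power_Suc[symmetric])
  finally have key: "(\<Prod>k\<in>{1..<p}. X ^ k - 1) = - (u ^ (p - 1)) + u ^ p * Q" .
  have "ddiff (map (\<lambda>k. of_nat k * \<alpha>) [1..<p]) F x
       = act \<alpha> (\<Prod>k\<in>{1..<p}. X ^ k - 1) F x"
  proof -
    have "prod_list (map (\<lambda>k. X ^ k - 1) [1..<p]) = (\<Prod>k\<in>{1..<p}. X ^ k - 1)"
      using prod.distinct_set_conv_list[of "[1..<p]" "\<lambda>k. X ^ k - 1"] by simp
    then show ?thesis by (simp add: ddiff_act X_def)
  qed
  also have "\<dots> = - act \<alpha> (u ^ (p - 1)) F x"
    by (simp only: key act_add act_mult upact act_neg) simp
  also have "act \<alpha> (u ^ (p - 1)) F x = ddiff (replicate (p - 1) \<alpha>) F x"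
  proof -
    have m: "map (\<lambda>k. of_nat k * \<alpha>) (replicate (p - 1) (1::nat)) = replicate (p - 1) \<alpha>"
      by simp
    have "ddiff (replicate (p - 1) \<alpha>) F x = act \<alpha> (prod_list (map (\<lambda>k. [:0,1:] ^ k - 1) (replicate (p - 1) (1::nat)))) F x"
      using ddiff_act[of \<alpha> "replicate (p - 1) 1" F x] unfolding m .
    also have "\<dots> = act \<alpha> (u ^ (p - 1)) F x"
      by (simp add: u_def X_def)
    finally show ?thesis by simp
  qed
  finally show ?thesis by simp
qed

end
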